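(* For all integers $n,m\ge 1$, letting $K_{n,m}$ be the complete bipartite graph with parts of sizes $n$ and $m$: ${\rm I}_e(K_{n,m})=0$ if $n\ne m$, and ${\rm I}_e(K_{n,n})=n$.
   Context: All graphs are finite and simple. A graph is locally irregular if no two adjacent vertices have the same degree. An edge-irregulator of a graph $G$ is a set $S\subseteq E(G)$ such that $G-S$ is locally irregular; ${\rm I}_e(G)$ is the minimum cardinality of an edge-irregulator of $G$. *)

theory Defs
  imports Main
begin

(* A finite simple graph is represented by its edge set: a set of 2-element
   vertex sets. (Isolated vertices do not affect local irregularity or I_e.) *)

definition degree :: "'a set set \<Rightarrow> 'a \<Rightarrow> nat" where
  "degree E v = card {e \<in> E. v \<in> e}"

definition locally_irregular :: "'a set set \<Rightarrow> bool" where
  "locally_irregular E \<longleftrightarrow> (\<forall>u v. {u, v} \<in> E \<longrightarrow> u \<noteq> v \<longrightarrow> degree E u \<noteq> degree E v)"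

definition edge_irregulator :: "'a set set \<Rightarrow> 'a set set \<Rightarrow> bool" where
  "edge_irregulator E S \<longleftrightarrow> S \<subseteq> E \<and> locally_irregular (E - S)"

(* minimum cardinality of an edge-irregulator (every finite graph has one: S = E) *)
definition irr_e :: "'a set set \<Rightarrow> nat" where
  "irr_e E = (LEAST k. \<exists>S. edge_irregulator E S \<and> card S = k)"

definition K_bip :: "nat \<Rightarrow> nat \<Rightarrow> (nat + nat) set set" where
  "K_bip n m = {{Inl i, Inr j} | i j. i < n \<and> j < m}"

end

theory Submission
  imports Defs
begin

definition B :: "nat set \<Rightarrow> nat set \<Rightarrow> (nat + nat) set set" where
  "B A C = {{Inl i, Inr j} | i j. i \<in> A \<and> j \<in> C}"

lemma degL: "finite C \<Longrightarrow> degree (B A C) (Inl i) = (if i \<in> A then card C else 0)"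
proof -
  assume fC: "finite C"
  have eq: "{e \<in> B A C. Inl i \<in> e} = (if i \<in> A then (\<lambda>j. {Inl i, Inr j}) ` C else {})"
    unfolding B_def by auto
  have inj: "inj_on (\<lambda>j. {Inl i, Inr j :: nat + nat}) C"
    by (auto simp: inj_on_def doubleton_eq_iff)
  show ?thesis unfolding degree_def eq using card_image[OF inj] by auto
qed

lemma degR: "finite A \<Longrightarrow> degree (B A C) (Inr j) = (if j \<in> C then card A else 0)"
proof -
  assume fA: "finite A"
  have eq: "{e \<in> B A C. Inr j \<in> e} = (if j \<in> C then (\<lambda>i. {Inl i, Inr j}) ` A else {})"
    unfolding B_def by auto
  have inj: "inj_on (\<lambda>i. {Inl i, Inr j :: nat + nat}) A"
    by (auto simp: inj_on_def doubleton_eq_iff)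
  show ?thesis unfolding degree_def eq using card_image[OF inj] by auto
qed

lemma LI: assumes "finite A" "finite C" "card A \<noteq> card C"
  shows "locally_irregular (B A C)"
  unfolding locally_irregular_def
proof (intro allI impI)
  fix u v assume uv: "{u, v} \<in> B A C" "u \<noteq> v"
  then obtain i j where ij: "{u, v} = {Inl i, Inr j}" "i \<in> A" "j \<in> C"
    unfolding B_def by auto
  have "(u = Inl i \<and> v = Inr j) \<or> (u = Inr j \<and> v = Inl i)"
    using ij(1) by (auto simp: doubleton_eq_iff)
  then show "degree (B A C) u \<noteq> degree (B A C) v"
    using degL[OF assms(2)] degR[OF assms(1)] ij assms(3) by auto
qed

lemma Kb: "K_bip n m = B {..<n} {..<m}"
  unfolding K_bip_def B_def by auto

lemma finK: "finite (K_bip n m)"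
proof -
  have "K_bip n m = (\<lambda>(i, j). {Inl i, Inr j}) ` ({..<n} \<times> {..<m})"
    unfolding K_bip_def by auto
  then show ?thesis by simp
qed

lemma touch_card:
  assumes "S \<subseteq> K_bip n m"
  shows "card {i. \<exists>e\<in>S. Inl i \<in> e} \<le> card S" and "card {j. \<exists>e\<in>S. Inr j \<in> e} \<le> card S"
proof -
  have fS: "finite S" using assms finK finite_subset by blast
  have one: "\<And>e. e \<in> S \<Longrightarrow> card {i. Inl i \<in> e} \<le> 1 \<and> card {j. Inr j \<in> e} \<le> 1"
  proof -
    fix e assume "e \<in> S"
    then obtain a b where "e = {Inl a, Inr b}" using assms unfolding K_bip_def by auto
    then have "{i. Inl i \<in> e} = {a}" "{j. Inr j \<in> e} = {b}" by auto
    then show "card {i. Inl i \<in> e} \<le> 1 \<and> card {j. Inr j \<in> e} \<le> 1" by simp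
  qed
  have "{i. \<exists>e\<in>S. Inl i \<in> e} = (\<Union>e\<in>S. {i. Inl i \<in> e})" by auto
  also have "card \<dots> \<le> (\<Sum>e\<in>S. card {i. Inl i \<in> e})" by (rule card_UN_le[OF fS])
  also have "\<dots> \<le> (\<Sum>e\<in>S. 1)" by (rule sum_mono) (use one in auto)
  finally show "card {i. \<exists>e\<in>S. Inl i \<in> e} \<le> card S" by simp
  have "{j. \<exists>e\<in>S. Inr j \<in> e} = (\<Union>e\<in>S. {j. Inr j \<in> e})" by auto
  also have "card \<dots> \<le> (\<Sum>e\<in>S. card {j. Inr j \<in> e})" by (rule card_UN_le[OF fS])
  also have "\<dots> \<le> (\<Sum>e\<in>S. 1)" by (rule sum_mono) (use one in auto)
  finally show "card {j. \<exists>e\<in>S. Inr j \<in> e} \<le> card S" by simp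
qed

lemma touch_sub:
  assumes "S \<subseteq> K_bip n m"
  shows "{i. \<exists>e\<in>S. Inl i \<in> e} \<subseteq> {..<n}" and "{j. \<exists>e\<in>S. Inr j \<in> e} \<subseteq> {..<m}"
proof -
  show "{i. \<exists>e\<in>S. Inl i \<in> e} \<subseteq> {..<n}"
  proof
    fix i assume "i \<in> {i. \<exists>e\<in>S. Inl i \<in> e}"
    then obtain e where "e \<in> S" "Inl i \<in> e" by blast
    then obtain a b where "e = {Inl a, Inr b}" "a < n" using assms unfolding K_bip_def by blast
    then show "i \<in> {..<n}" using \<open>Inl i \<in> e\<close> by auto
  qed
  show "{j. \<exists>e\<in>S. Inr j \<in> e} \<subseteq> {..<m}"
  proof
    fix j assume "j \<in> {j. \<exists>e\<in>S. Inr j \<in> e}"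
    then obtain e where "e \<in> S" "Inr j \<in> e" by blast
    then obtain a b where "e = {Inl a, Inr b}" "b < m" using assms unfolding K_bip_def by blast
    then show "j \<in> {..<m}" using \<open>Inr j \<in> e\<close> by auto
  qed
qed

lemma lower:
  assumes "edge_irregulator (K_bip n n) S"
  shows "n \<le> card S"
proof (rule ccontr)
  assume "\<not> n \<le> card S"
  hence lt: "card S < n" by simp
  have sub: "S \<subseteq> K_bip n n" using assms unfolding edge_irregulator_def by simp
  have li: "locally_irregular (K_bip n n - S)" using assms unfolding edge_irregulator_def by simp
  obtain i where i: "i < n" "i \<notin> {i. \<exists>e\<in>S. Inl i \<in> e}"
  proof -
    have "card {i. \<exists>e\<in>S. Inl i \<in> e} < card {..<n}" using touch_card(1)[OF sub] lt by simp
    hence "\<not> {..<n} \<subseteq> {i. \<exists>e\<in>S. Inl i \<in> e}"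
      using touch_sub(1)[OF sub] by (metis order.refl subset_antisym less_irrefl)
    thus ?thesis using that by auto
  qed
  obtain j where j: "j < n" "j \<notin> {j. \<exists>e\<in>S. Inr j \<in> e}"
  proof -
    have "card {j. \<exists>e\<in>S. Inr j \<in> e} < card {..<n}" using touch_card(2)[OF sub] lt by simp
    hence "\<not> {..<n} \<subseteq> {j. \<exists>e\<in>S. Inr j \<in> e}"
      using touch_sub(2)[OF sub] by (metis order.refl subset_antisym less_irrefl)
    thus ?thesis using that by auto
  qed
  have e1: "{Inl i, Inr j} \<in> K_bip n n" using i(1) j(1) unfolding K_bip_def by blast
  have e2: "{Inl i, Inr j} \<notin> S" using i(2) by blast
  have e: "{Inl i, Inr j} \<in> K_bip n n - S" using e1 e2 by blast
  have d1: "degree (K_bip n n - S) (Inl i) = degree (K_bip n n) (Inl i)"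
    unfolding degree_def using i(2) by (intro arg_cong[where f=card]) blast
  have d2: "degree (K_bip n n - S) (Inr j) = degree (K_bip n n) (Inr j)"
    unfolding degree_def using j(2) by (intro arg_cong[where f=card]) blast
  have "degree (K_bip n n) (Inl i) = degree (K_bip n n) (Inr j)"
    unfolding Kb using degL[of "{..<n}"] degR[of "{..<n}"] i j by simp
  moreover have "Inl i \<noteq> (Inr j :: nat + nat)" by simp
  ultimately show False using li e d1 d2 unfolding locally_irregular_def by metis
qed

theorem theorem5:
  fixes n m :: nat
  assumes "n \<ge> 1" and "m \<ge> 1"
  shows "(n \<noteq> m \<longrightarrow> irr_e (K_bip n m) = 0) \<and> irr_e (K_bip n n) = n"
proof
  show "n \<noteq> m \<longrightarrow> irr_e (K_bip n m) = 0"
  proof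
    assume "n \<noteq> m"
    hence "locally_irregular (K_bip n m)" unfolding Kb by (intro LI) auto
    hence "edge_irregulator (K_bip n m) {} \<and> card {} = (0::nat)"
      unfolding edge_irregulator_def by simp
    thus "irr_e (K_bip n m) = 0" unfolding irr_e_def by (intro Least_eq_0) blast
  qed
  define S0 :: "(nat + nat) set set" where "S0 = {{Inl 0, Inr j} | j. j < n}"
  have diff: "K_bip n n - S0 = B {1..<n} {..<n}"
    unfolding K_bip_def B_def S0_def by (auto simp: doubleton_eq_iff)
  have "S0 = (\<lambda>j. {Inl 0, Inr j}) ` {..<n}" unfolding S0_def by auto
  moreover have "inj_on (\<lambda>j. {Inl 0, Inr j :: nat + nat}) {..<n}"
    by (auto simp: inj_on_def doubleton_eq_iff)
  ultimately have cS0: "card S0 = n" by (simp add: card_image)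
  have sub: "S0 \<subseteq> K_bip n n" proof -
    have "0 < n" using assms(1) by simp
    then show ?thesis unfolding S0_def K_bip_def by blast
  qed
  have "locally_irregular (K_bip n n - S0)" unfolding diff using assms(1) by (intro LI) auto
  hence w: "edge_irregulator (K_bip n n) S0" using sub unfolding edge_irregulator_def by simp
  show "irr_e (K_bip n n) = n" unfolding irr_e_def
  proof (rule Least_equality)
    show "\<exists>S. edge_irregulator (K_bip n n) S \<and> card S = n" using w cS0 by blast
  next
    fix y assume "\<exists>S. edge_irregulator (K_bip n n) S \<and> card S = y"
    then show "n \<le> y" using lower by blast
  qed
qed

end
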